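(* Fix a finite set of docking points $Q=\{q_1,\dots,q_J\}\subset\partial D$ together with a cyclic order of visitation. If some gap angle of $Q$ is greater than $\pi$, then there is a $\mathbf W_d$-minimizing embedded monotone cycle in $D$ (rel $Q$) having winding number zero about the puncture. Conversely, if no gap angle is greater than $\pi$, then there is a $\mathbf W_d$-minimizing embedded cycle in $D$ (rel $Q$) of winding number $\pm 1$.
   Context: The Y-graph $\Upsilon$ has central vertex $v_0$, outer vertices $v_1,v_2,v_3$ and edges $e_i$ from $v_0$ to $v_i$ identified with $[0,1]$ ($0$ at $v_0$); write $x=|x|e_{\iota(x)}$ with edge index $\iota(x)$ (undefined at $v_0$ and then counted as different from every index). $\mathcal C=\{(x,y)\in\Upsilon\times\Upsilon:x\ne y\}$ and $D=\{(x,y)\in\mathcal C:\iota(x)\ne\iota(y)\}$. $D$ is the union of six punctured squares $\{(x,y):\iota(x)=i,\iota(y)=j\}\cong[0,1]^2\setminus\{(0,0)\}$, $i\ne j$, glued cyclically along the segments where $|x|=0$ or $|y|=0$; rescaling each square's quadrant angle by $2/3$ gives a homeomorphism of $D$ with the punctured closed unit disc $\{(r,\theta):0<r\le1\}$ in which the six branch segments $\{|x|=0\}\cup\{|y|=0\}$ (where an AGV occupies $v_0$) are the radial lines at angles $\theta\in\Theta=\{n\pi/3:n\in\mathbb Z\}$, the puncture corresponds to $(v_0,v_0)$, and $\partial D=\{|x|=1\text{ or }|y|=1\}$ is the unit circle. Given $Q=\{q_1,\dots,q_J\}\subset\partial D$ indexed in the order of visitation, the gap angles are $ga_j=\theta(q_{j+1})-\theta(q_j)\in(0,2\pi)$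 (indices mod $J$), differences taken with respect to the orientation of $\partial D$, so that $\sum_j ga_j=2\pi$. A cycle rel $Q$ is a closed curve in $D$ visiting the points of $Q$ in the given cyclic order; it is monotone if it visits $Q$ in the cyclic order of $\partial D$. The cost $\mathbf W_d(\gamma)$ of a curve is its number of intersections with the branch set $\{|x|=0\}\cup\{|y|=0\}$, i.e., the number of times an AGV occupies the central vertex; $\gamma$ is $\mathbf W_d$-minimizing if its cost is minimal among such cycles rel $Q$. Winding number is taken about the puncture; for embedded cycles it is $-1$, $0$ or $1$. *)

theory Defs
  imports "HOL-Complex_Analysis.Complex_Analysis" "HOL-Library.Extended_Nat"
begin

text \<open>Model of the configuration space D (via the homeomorphism described in the
paper): the punctured closed unit disc in the complex plane. The puncture 0
corresponds to (v0,v0), the unit circle is the boundary of D.\<close>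

definition DD :: "complex set" where
  "DD = {z. 0 < cmod z \<and> cmod z \<le> 1}"

text \<open>Branch set: the six radial segments at angles n*pi/3 (an AGV occupies v0).\<close>
definition branch :: "complex set" where
  "branch = {z \<in> DD. \<exists>n::int. \<exists>r::real. r > 0 \<and> z = of_real r * cis (of_int n * pi / 3)}"

definition ccw_angle :: "complex \<Rightarrow> complex \<Rightarrow> real" where
  "ccw_angle a b = (let d = Arg b - Arg a in if d \<le> 0 then d + 2 * pi else d)"

definition gap_angle :: "(nat \<Rightarrow> complex) \<Rightarrow> nat \<Rightarrow> nat \<Rightarrow> real" where
  "gap_angle q J j = ccw_angle (q j) (q (Suc j mod J))"

text \<open>Closed curves are continuous maps from the unit circle into D;
the associated path on [0,1] is t \<mapsto> c (cis (2 pi t)).\<close>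
definition loop_path :: "(complex \<Rightarrow> complex) \<Rightarrow> real \<Rightarrow> complex" where
  "loop_path c t = c (cis (2 * pi * t))"

definition cycle_rel :: "(nat \<Rightarrow> complex) \<Rightarrow> nat \<Rightarrow> (complex \<Rightarrow> complex) \<Rightarrow> bool" where
  "cycle_rel q J c \<longleftrightarrow>
     continuous_on (sphere 0 1) c \<and> c ` sphere 0 1 \<subseteq> DD \<and>
     (\<exists>t::nat \<Rightarrow> real. (\<forall>j<J. 0 \<le> t j \<and> t j < 1 \<and> loop_path c (t j) = q j) \<and>
                        (\<forall>i j. i < j \<and> j < J \<longrightarrow> t i < t j))"

text \<open>The visitation order agrees with the (counter-clockwise) cyclic order of the boundary.\<close>
definition ccw_order :: "(nat \<Rightarrow> complex) \<Rightarrow> nat \<Rightarrow> bool" where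
  "ccw_order q J \<longleftrightarrow> (\<Sum>j<J. gap_angle q J j) = 2 * pi"

definition monotone_cycle :: "(nat \<Rightarrow> complex) \<Rightarrow> nat \<Rightarrow> (complex \<Rightarrow> complex) \<Rightarrow> bool" where
  "monotone_cycle q J c \<longleftrightarrow> cycle_rel q J c \<and> ccw_order q J"

definition embedded :: "(complex \<Rightarrow> complex) \<Rightarrow> bool" where
  "embedded c \<longleftrightarrow> inj_on c (sphere 0 1)"

definition Wd :: "(complex \<Rightarrow> complex) \<Rightarrow> enat" where
  "Wd c = (let S = {z \<in> sphere 0 1. c z \<in> branch} in if finite S then enat (card S) else \<infinity>)"

definition Wd_minimizing :: "(nat \<Rightarrow> complex) \<Rightarrow> nat \<Rightarrow> (complex \<Rightarrow> complex) \<Rightarrow> bool" where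
  "Wd_minimizing q J c \<longleftrightarrow> cycle_rel q J c \<and> (\<forall>c'. cycle_rel q J c' \<longrightarrow> Wd c \<le> Wd c')"

definition winding :: "(complex \<Rightarrow> complex) \<Rightarrow> complex" where
  "winding c = winding_number (loop_path c) 0"

end

theory Submission
  imports Defs
begin

definition CL :: "real \<Rightarrow> real \<Rightarrow> int set" where
  "CL u v = {n. u \<le> of_int n * pi / 3 \<and> of_int n * pi / 3 \<le> v}"
definition OP :: "real \<Rightarrow> real \<Rightarrow> int set" where
  "OP u v = {n. u < of_int n * pi / 3 \<and> of_int n * pi / 3 < v}"
definition cnt :: "real \<Rightarrow> real \<Rightarrow> nat" where
  "cnt u v = card (CL u v) + card (OP u v)"

lemma le_lev_iff: "(u \<le> of_int n * pi / 3) = (3 * u / pi \<le> of_int n)"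
  using pi_gt_zero by (auto simp: field_simps)
lemma lev_le_iff: "(of_int n * pi / 3 \<le> v) = (of_int n \<le> 3 * v / pi)"
  using pi_gt_zero by (auto simp: field_simps)
lemma lt_lev_iff: "(u < of_int n * pi / 3) = (3 * u / pi < of_int n)"
  using pi_gt_zero by (auto simp: field_simps)
lemma lev_lt_iff: "(of_int n * pi / 3 < v) = (of_int n < 3 * v / pi)"
  using pi_gt_zero by (auto simp: field_simps)

lemma CL_alt: "CL u v = {n. (3 * u / pi) \<le> of_int n \<and> of_int n \<le> (3 * v / pi)}"
  unfolding CL_def le_lev_iff lev_le_iff ..
lemma OP_alt: "OP u v = {n. (3 * u / pi) < of_int n \<and> of_int n < (3 * v / pi)}"
  unfolding OP_def lt_lev_iff lev_lt_iff ..

lemma finite_CL: "finite (CL u v)"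
proof -
  have "CL u v \<subseteq> {\<lceil>(3 * u / pi)\<rceil>..\<lfloor>(3 * v / pi)\<rfloor>}"
    unfolding CL_alt by (auto simp: ceiling_le_iff le_floor_iff)
  then show ?thesis by (rule finite_subset) simp
qed
lemma finite_OP: "finite (OP u v)"
proof -
  have "OP u v \<subseteq> CL u v" unfolding OP_def CL_def by auto
  then show ?thesis using finite_CL finite_subset by blast
qed

lemma cnt_ge6:
  assumes "v - u \<ge> pi" shows "6 \<le> cnt u v"
proof -
  define x where "x = (3 * u / pi)"
  define y where "y = (3 * v / pi)"
  have xy: "y - x \<ge> 3" using assms pi_gt_zero unfolding x_def y_def by (simp add: field_simps)
  define n0 where "n0 = \<lceil>x\<rceil>"
  have n0: "x \<le> of_int n0" "of_int n0 < x + 1" unfolding n0_def by linarith+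
  show ?thesis
  proof (cases "of_int n0 = x")
    case True
    have "{n0..n0+3} \<subseteq> CL u v" unfolding CL_alt x_def[symmetric] y_def[symmetric]
      using True xy by auto
    hence "card {n0..n0+3} \<le> card (CL u v)" by (rule card_mono[OF finite_CL])
    hence c1: "4 \<le> card (CL u v)" by simp
    have "{n0+1..n0+2} \<subseteq> OP u v" unfolding OP_alt x_def[symmetric] y_def[symmetric]
      using True xy by auto
    hence "card {n0+1..n0+2} \<le> card (OP u v)" by (rule card_mono[OF finite_OP])
    hence c2: "2 \<le> card (OP u v)" by simp
    show ?thesis using c1 c2 unfolding cnt_def by simp
  next
    case False
    have "{n0..n0+2} \<subseteq> CL u v" unfolding CL_alt x_def[symmetric] y_def[symmetric]
      using n0 xy by auto
    hence "card {n0..n0+2} \<le> card (CL u v)" by (rule card_mono[OF finite_CL])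
    hence c1: "3 \<le> card (CL u v)" by simp
    have "{n0..n0+2} \<subseteq> OP u v" unfolding OP_alt x_def[symmetric] y_def[symmetric]
      using n0 xy False by auto
    hence "card {n0..n0+2} \<le> card (OP u v)" by (rule card_mono[OF finite_OP])
    hence c2: "3 \<le> card (OP u v)" by simp
    show ?thesis using c1 c2 unfolding cnt_def by simp
  qed
qed

lemma cnt_le6:
  assumes "v - u < pi" shows "cnt u v \<le> 6"
proof -
  define x where "x = (3 * u / pi)"
  define y where "y = (3 * v / pi)"
  have xy: "y - x < 3" using assms pi_gt_zero unfolding x_def y_def by (simp add: field_simps)
  define n0 where "n0 = \<lceil>x\<rceil>"
  have n0: "x \<le> of_int n0" "of_int n0 < x + 1" unfolding n0_def by linarith+
  have ge: "\<And>n. x \<le> of_int n \<Longrightarrow> n0 \<le> n" unfolding n0_def by (simp add: ceiling_le_iff)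
  show ?thesis
  proof (cases "of_int n0 = x")
    case True
    have "CL u v \<subseteq> {n0..n0+2}" unfolding CL_alt x_def[symmetric] y_def[symmetric]
    proof
      fix n assume "n \<in> {n. x \<le> real_of_int n \<and> real_of_int n \<le> y}"
      hence "x \<le> of_int n" "of_int n \<le> y" by auto
      with ge[of n] True xy show "n \<in> {n0..n0+2}" by auto
    qed
    hence "card (CL u v) \<le> card {n0..n0+2}" by (rule card_mono[rotated]) simp
    hence c1: "card (CL u v) \<le> 3" by simp
    have "OP u v \<subseteq> {n0+1..n0+2}" unfolding OP_alt x_def[symmetric] y_def[symmetric]
    proof
      fix n assume "n \<in> {n. x < real_of_int n \<and> real_of_int n < y}"
      hence "x < of_int n" "of_int n < y" by auto
      with True xy show "n \<in> {n0+1..n0+2}" by auto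
    qed
    hence "card (OP u v) \<le> card {n0+1..n0+2}" by (rule card_mono[rotated]) simp
    hence c2: "card (OP u v) \<le> 2" by simp
    show ?thesis using c1 c2 unfolding cnt_def by simp
  next
    case False
    have "CL u v \<subseteq> {n0..n0+2}" unfolding CL_alt x_def[symmetric] y_def[symmetric]
    proof
      fix n assume "n \<in> {n. x \<le> real_of_int n \<and> real_of_int n \<le> y}"
      hence "x \<le> of_int n" "of_int n \<le> y" by auto
      with ge[of n] n0 xy show "n \<in> {n0..n0+2}" by auto
    qed
    hence "card (CL u v) \<le> card {n0..n0+2}" by (rule card_mono[rotated]) simp
    hence c1: "card (CL u v) \<le> 3" by simp
    have "OP u v \<subseteq> {n0..n0+2}" unfolding OP_alt x_def[symmetric] y_def[symmetric]
    proof
      fix n assume "n \<in> {n. x < real_of_int n \<and> real_of_int n < y}"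
      hence "x < of_int n" "of_int n < y" by auto
      with ge[of n] n0 xy show "n \<in> {n0..n0+2}" by auto
    qed
    hence "card (OP u v) \<le> card {n0..n0+2}" by (rule card_mono[rotated]) simp
    hence c2: "card (OP u v) \<le> 3" by simp
    show ?thesis using c1 c2 unfolding cnt_def by simp
  qed
qed

lemma cnt_mono:
  assumes "u \<le> u'" shows "cnt u' v \<le> cnt u v"
proof -
  have "CL u' v \<subseteq> CL u v" "OP u' v \<subseteq> OP u v" using assms unfolding CL_def OP_def by auto
  thus ?thesis unfolding cnt_def using card_mono finite_CL finite_OP by (metis add_mono)
qed

lemma cnt_shift: "cnt (u + 2*pi* of_int m) (v + 2*pi* of_int m) = cnt u v"
proof -
  have e: "\<And>n. of_int (n + 6*m) * pi / 3 = of_int n * pi / 3 + 2*pi* of_int m"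
    by (simp add: field_simps)
  have "CL (u + 2*pi* of_int m) (v + 2*pi* of_int m) = (\<lambda>n. n + 6*m) ` CL u v"
  proof (rule set_eqI, rule iffI)
    fix n assume "n \<in> CL (u + 2*pi* of_int m) (v + 2*pi* of_int m)"
    hence "n - 6*m \<in> CL u v" unfolding CL_def using e[of "n - 6*m"] by auto
    thus "n \<in> (\<lambda>n. n + 6*m) ` CL u v" by (metis (no_types, lifting) diff_add_cancel image_eqI)
  next
    fix n assume "n \<in> (\<lambda>n. n + 6*m) ` CL u v"
    then obtain k where k: "k \<in> CL u v" "n = k + 6*m" by auto
    thus "n \<in> CL (u + 2*pi * of_int m) (v + 2*pi * of_int m)" using e[of k] unfolding CL_def by auto
  qed
  moreover have "OP (u + 2*pi* of_int m) (v + 2*pi* of_int m) = (\<lambda>n. n + 6*m) ` OP u v"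
  proof (rule set_eqI, rule iffI)
    fix n assume "n \<in> OP (u + 2*pi* of_int m) (v + 2*pi* of_int m)"
    hence "n - 6*m \<in> OP u v" unfolding OP_def using e[of "n - 6*m"] by auto
    thus "n \<in> (\<lambda>n. n + 6*m) ` OP u v" by (metis (no_types, lifting) diff_add_cancel image_eqI)
  next
    fix n assume "n \<in> (\<lambda>n. n + 6*m) ` OP u v"
    then obtain k where k: "k \<in> OP u v" "n = k + 6*m" by auto
    thus "n \<in> OP (u + 2*pi * of_int m) (v + 2*pi * of_int m)" using e[of k] unfolding OP_def by auto
  qed
  moreover have "inj (\<lambda>n::int. n + 6*m)" by (auto simp: inj_def)
  ultimately show ?thesis unfolding cnt_def by (simp add: card_image inj_on_subset)
qed


lemma lift_lb_aux:
  fixes \<theta> :: "real \<Rightarrow> real"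
  assumes cont: "continuous_on {0..1} \<theta>" and per: "\<theta> 0 = \<theta> 1"
    and tu: "0 \<le> tu" and tv: "tv < 1" and le: "tu \<le> tv"
    and u: "\<theta> tu = u" and v: "\<theta> tv = v"
  shows "\<exists>f. inj_on f (CL u v <+> OP u v) \<and>
           f ` (CL u v <+> OP u v) \<subseteq> {t. 0 \<le> t \<and> t < 1 \<and> (\<exists>n::int. \<theta> t = of_int n * pi / 3)}"
proof -
  have "\<forall>n\<in>CL u v. \<exists>s. tu \<le> s \<and> s \<le> tv \<and> \<theta> s = of_int n * pi / 3"
  proof
    fix n assume "n \<in> CL u v"
    hence "\<theta> tu \<le> of_int n * pi / 3" "of_int n * pi / 3 \<le> \<theta> tv" using u v unfolding CL_def by auto
    moreover have "continuous_on {tu..tv} \<theta>" by (rule continuous_on_subset[OF cont]) (use tu tv in auto)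
    ultimately show "\<exists>s. tu \<le> s \<and> s \<le> tv \<and> \<theta> s = of_int n * pi / 3"
      using IVT'[of \<theta> tu _ tv] le by blast
  qed
  then obtain s where s: "\<And>n. n \<in> CL u v \<Longrightarrow> tu \<le> s n \<and> s n \<le> tv \<and> \<theta> (s n) = of_int n * pi / 3"
    by metis
  have "\<forall>n\<in>OP u v. \<exists>r. 0 \<le> r \<and> r < 1 \<and> (r < tu \<or> tv < r) \<and> \<theta> r = of_int n * pi / 3"
  proof
    fix n assume n: "n \<in> OP u v"
    define l where "l = of_int n * pi / 3"
    have ul: "u < l" and lv: "l < v" using n unfolding OP_def l_def by auto
    show "\<exists>r. 0 \<le> r \<and> r < 1 \<and> (r < tu \<or> tv < r) \<and> \<theta> r = of_int n * pi / 3"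
    proof (cases "l \<le> \<theta> 0")
      case True
      have "continuous_on {0..tu} \<theta>" by (rule continuous_on_subset[OF cont]) (use tu tv le in auto)
      then obtain r where "0 \<le> r" "r \<le> tu" "\<theta> r = l" using IVT2'[of \<theta> tu l 0] True u ul tu by force
      moreover have "r \<noteq> tu" using \<open>\<theta> r = l\<close> u ul by auto
      ultimately show ?thesis using le tv unfolding l_def by (intro exI[of _ r]) auto
    next
      case False
      have "continuous_on {tv..1} \<theta>" by (rule continuous_on_subset[OF cont]) (use tu tv le in auto)
      then obtain r where "tv \<le> r" "r \<le> 1" "\<theta> r = l" using IVT2'[of \<theta> 1 l tv] False per v lv tv by force
      moreover have "r \<noteq> tv" using \<open>\<theta> r = l\<close> v lv by auto
      moreover have "r \<noteq> 1" using \<open>\<theta> r = l\<close> False per by auto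
      ultimately show ?thesis using le tu unfolding l_def by (intro exI[of _ r]) auto
    qed
  qed
  then obtain r where r: "\<And>n. n \<in> OP u v \<Longrightarrow> 0 \<le> r n \<and> r n < 1 \<and> (r n < tu \<or> tv < r n) \<and> \<theta> (r n) = of_int n * pi / 3"
    by metis
  define f where "f = case_sum s r"
  have inj: "inj_on f (CL u v <+> OP u v)"
  proof (rule inj_onI)
    fix x y assume x: "x \<in> CL u v <+> OP u v" and y: "y \<in> CL u v <+> OP u v" and e: "f x = f y"
    show "x = y"
    proof (cases x)
      case xa: (Inl a)
      then have a: "a \<in> CL u v" using x by auto
      show ?thesis
      proof (cases y)
        case yb: (Inl b)
        then have b: "b \<in> CL u v" using y by auto
        have "s a = s b" using e xa yb by (simp add: f_def)
        then have "of_int a * pi / 3 = of_int b * pi / 3" using s[OF a] s[OF b] by metis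
        then show ?thesis using xa yb by simp
      next
        case yb: (Inr b)
        then have b: "b \<in> OP u v" using y by auto
        have "s a = r b" using e xa yb by (simp add: f_def)
        then show ?thesis using s[OF a] r[OF b] by auto
      qed
    next
      case xa: (Inr a)
      then have a: "a \<in> OP u v" using x by auto
      show ?thesis
      proof (cases y)
        case yb: (Inl b)
        then have b: "b \<in> CL u v" using y by auto
        have "r a = s b" using e xa yb by (simp add: f_def)
        then show ?thesis using r[OF a] s[OF b] by auto
      next
        case yb: (Inr b)
        then have b: "b \<in> OP u v" using y by auto
        have "r a = r b" using e xa yb by (simp add: f_def)
        then have "of_int a * pi / 3 = of_int b * pi / 3" using r[OF a] r[OF b] by metis
        then show ?thesis using xa yb by simp
      qed
    qed
  qed
  have "f ` (CL u v <+> OP u v) \<subseteq> {t. 0 \<le> t \<and> t < 1 \<and> (\<exists>n::int. \<theta> t = of_int n * pi / 3)}"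
  proof
    fix t assume "t \<in> f ` (CL u v <+> OP u v)"
    then obtain x where x: "x \<in> CL u v <+> OP u v" "t = f x" by auto
    show "t \<in> {t. 0 \<le> t \<and> t < 1 \<and> (\<exists>n::int. \<theta> t = of_int n * pi / 3)}"
    proof (cases x)
      case (Inl a) thus ?thesis using x s[of a] tu tv by (auto simp: f_def)
    next
      case (Inr a) thus ?thesis using x r[of a] by (auto simp: f_def)
    qed
  qed
  with inj show ?thesis by blast
qed

lemma CL_neg: "CL (-v) (-u) = uminus ` CL u v"
proof -
  have "CL (-v) (-u) = {n. -n \<in> CL u v}" by (auto simp: CL_def)
  also have "\<dots> = uminus ` CL u v" by (force simp: image_iff)
  finally show ?thesis .
qed
lemma OP_neg: "OP (-v) (-u) = uminus ` OP u v"
proof -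
  have "OP (-v) (-u) = {n. -n \<in> OP u v}" by (auto simp: OP_def)
  also have "\<dots> = uminus ` OP u v" by (force simp: image_iff)
  finally show ?thesis .
qed

lemma lift_lb:
  fixes \<theta> :: "real \<Rightarrow> real"
  assumes cont: "continuous_on {0..1} \<theta>" and per: "\<theta> 0 = \<theta> 1"
    and tu: "0 \<le> tu" "tu < 1" and tv: "0 \<le> tv" "tv < 1" and le: "u \<le> v"
    and u: "\<theta> tu = u" and v: "\<theta> tv = v"
  shows "\<exists>f. inj_on f (CL u v <+> OP u v) \<and>
           f ` (CL u v <+> OP u v) \<subseteq> {t. 0 \<le> t \<and> t < 1 \<and> (\<exists>n::int. \<theta> t = of_int n * pi / 3)}"
proof (cases "tu \<le> tv")
  case True thus ?thesis using lift_lb_aux[OF cont per tu(1) tv(2) True u v] by blast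
next
  case False
  have cont': "continuous_on {0..1} (\<lambda>t. - \<theta> t)" using cont by (intro continuous_intros)
  obtain g where g: "inj_on g (CL (-v) (-u) <+> OP (-v) (-u))"
    "g ` (CL (-v) (-u) <+> OP (-v) (-u)) \<subseteq> {t. 0 \<le> t \<and> t < 1 \<and> (\<exists>n::int. - \<theta> t = of_int n * pi / 3)}"
    using lift_lb_aux[OF cont' _ tv(1) tu(2), of "-v" "-u"] False per u v by auto
  define f where "f = case_sum (\<lambda>n. g (Inl (-n))) (\<lambda>n. g (Inr (-n)))"
  have mem: "\<And>x. x \<in> CL u v <+> OP u v \<Longrightarrow> map_sum uminus uminus x \<in> CL (-v) (-u) <+> OP (-v) (-u)"
    unfolding CL_neg OP_neg by auto
  have fx: "\<And>x. f x = g (map_sum uminus uminus x)" unfolding f_def by (simp split: sum.splits)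
  have minj: "inj (map_sum (uminus::int\<Rightarrow>int) (uminus::int\<Rightarrow>int))"
  proof (rule injI)
    fix x y :: "int + int" assume "map_sum uminus uminus x = map_sum uminus uminus y"
    thus "x = y" by (cases x; cases y) auto
  qed
  show ?thesis
  proof (intro exI conjI)
    show "inj_on f (CL u v <+> OP u v)"
    proof (rule inj_onI)
      fix x y assume "x \<in> CL u v <+> OP u v" "y \<in> CL u v <+> OP u v" "f x = f y"
      then have "map_sum uminus uminus x = map_sum uminus uminus y"
        using g(1) mem unfolding fx by (meson inj_onD)
      then show "x = y" using minj by (meson injD)
    qed
    show "f ` (CL u v <+> OP u v) \<subseteq> {t. 0 \<le> t \<and> t < 1 \<and> (\<exists>n::int. \<theta> t = of_int n * pi / 3)}"
    proof
      fix t assume "t \<in> f ` (CL u v <+> OP u v)"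
      then obtain x where "x \<in> CL u v <+> OP u v" "t = f x" by auto
      hence "t \<in> g ` (CL (-v) (-u) <+> OP (-v) (-u))" using mem fx by auto
      with g(2) obtain n::int where "0 \<le> t" "t < 1" "- \<theta> t = of_int n * pi / 3" by blast
      thus "t \<in> {t. 0 \<le> t \<and> t < 1 \<and> (\<exists>n::int. \<theta> t = of_int n * pi / 3)}"
        by (auto intro!: exI[of _ "-n"])
    qed
  qed
qed


lemma unit_cis_Arg: "cmod z = 1 \<Longrightarrow> cis (Arg z) = z"
proof -
  assume h: "cmod z = 1"
  hence "z \<noteq> 0" by auto
  thus ?thesis using cis_Arg[of z] h by (simp add: sgn_div_norm)
qed

lemma cis_eq_imp: "cis a = cis b \<Longrightarrow> \<exists>n::int. a = b + 2 * pi * of_int n"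
proof -
  assume "cis a = cis b"
  hence "sin a = sin b \<and> cos a = cos b" by (metis cis.sel)
  thus ?thesis using sin_cos_eq_iff by blast
qed

lemma norm_cis' [simp]: "cmod (cis x) = 1" by simp

lemma cont_loop_path:
  assumes "continuous_on (sphere 0 1) c"
  shows "continuous_on {0..1} (loop_path c)"
proof -
  have "continuous_on {0..1} (\<lambda>t::real. cis (2 * pi * t))" by (intro continuous_intros)
  moreover have "(\<lambda>t::real. cis (2 * pi * t)) ` {0..1} \<subseteq> sphere 0 1" by auto
  ultimately show ?thesis unfolding loop_path_def
    using continuous_on_compose2[OF assms] by blast
qed

lemma cis_2pi_inj: "inj_on (\<lambda>t::real. cis (2 * pi * t)) {0..<1}"
proof (rule inj_onI)
  fix s t :: real assume s: "s \<in> {0..<1}" and t: "t \<in> {0..<1}" and e: "cis (2 * pi * s) = cis (2 * pi * t)"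
  then obtain n::int where "2 * pi * s = 2 * pi * t + 2 * pi * of_int n" using cis_eq_imp by blast
  hence "(2 * pi) * s = (2 * pi) * (t + of_int n)" by (simp add: algebra_simps)
  hence "s = t + of_int n" using pi_gt_zero by (metis mult_cancel_left not_real_square_gt_zero times_divide_eq_right divide_self_if mult_zero_left zero_less_mult_iff zero_less_numeral)
  hence "(-1::real) < of_int n" "of_int n < (1::real)" using s t by auto
  hence "-1 < n" "n < 1" by simp_all
  hence "n = 0" by simp
  thus "s = t" using \<open>s = t + of_int n\<close> by simp
qed

lemma hits_lb:
  fixes \<theta> :: "real \<Rightarrow> real"
  assumes cont: "continuous_on {0..1} \<theta>" and per: "\<theta> 0 = \<theta> 1"
    and rep: "\<And>t. t \<in> {0..1} \<Longrightarrow> loop_path c t = of_real (cmod (loop_path c t)) * cis (\<theta> t)"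
    and inD: "\<And>t. t \<in> {0..1} \<Longrightarrow> loop_path c t \<in> DD"
    and tu: "0 \<le> tu" "tu < 1" and tv: "0 \<le> tv" "tv < 1" and le: "u \<le> v"
    and u: "\<theta> tu = u" and v: "\<theta> tv = v"
  shows "enat (cnt u v) \<le> Wd c"
proof -
  obtain f where f: "inj_on f (CL u v <+> OP u v)"
    "f ` (CL u v <+> OP u v) \<subseteq> {t. 0 \<le> t \<and> t < 1 \<and> (\<exists>n::int. \<theta> t = of_int n * pi / 3)}"
    using lift_lb[OF cont per tu tv le u v] by blast
  define g where "g = (\<lambda>t::real. cis (2 * pi * t))"
  define Z where "Z = {z \<in> sphere 0 1. c z \<in> branch}"
  have sub: "(g \<circ> f) ` (CL u v <+> OP u v) \<subseteq> Z"
  proof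
    fix z assume "z \<in> (g \<circ> f) ` (CL u v <+> OP u v)"
    then obtain t where t: "t \<in> f ` (CL u v <+> OP u v)" "z = g t" by auto
    with f(2) obtain n::int where tt: "0 \<le> t" "t < 1" "\<theta> t = of_int n * pi / 3" by blast
    have lp: "loop_path c t = c z" unfolding loop_path_def t(2) g_def ..
    have D: "loop_path c t \<in> DD" using inD tt by auto
    hence pos: "cmod (loop_path c t) > 0" unfolding DD_def by auto
    have "loop_path c t = of_real (cmod (loop_path c t)) * cis (of_int n * pi / 3)"
      using rep[of t] tt by auto
    hence "c z = of_real (cmod (c z)) * cis (of_int n * pi / 3)" using lp by simp
    moreover have "0 < cmod (c z)" "c z \<in> DD" using pos D lp by simp_all
    ultimately have "c z \<in> branch" unfolding branch_def by blast
    moreover have "z \<in> sphere 0 1" using t(2) g_def by simp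
    ultimately show "z \<in> Z" unfolding Z_def by auto
  qed
  have inj: "inj_on (g \<circ> f) (CL u v <+> OP u v)"
  proof (rule comp_inj_on[OF f(1)])
    show "inj_on g (f ` (CL u v <+> OP u v))"
    proof -
      have "f ` (CL u v <+> OP u v) \<subseteq> {0..<1}" by (rule subset_trans[OF f(2)]) auto
      thus ?thesis using inj_on_subset[OF cis_2pi_inj] unfolding g_def by blast
    qed
  qed
  show ?thesis
  proof (cases "finite Z")
    case True
    have "card (CL u v <+> OP u v) \<le> card Z"
      using card_inj_on_le[OF inj sub True] .
    hence "cnt u v \<le> card Z" unfolding cnt_def using finite_CL finite_OP by (simp add: card_Plus)
    thus ?thesis using True unfolding Wd_def Z_def[symmetric] Let_def by simp
  next
    case False
    thus ?thesis unfolding Wd_def Z_def[symmetric] Let_def by simp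
  qed
qed

lemma slit_lift:
  assumes cc: "continuous_on (sphere 0 1) c" and img: "c ` sphere 0 1 \<subseteq> DD"
    and miss: "\<And>z r. z \<in> sphere 0 1 \<Longrightarrow> r > 0 \<Longrightarrow> c z \<noteq> of_real r * cis \<phi>"
  shows "\<exists>\<theta>. continuous_on {0..1} \<theta> \<and> \<theta> 0 = \<theta> 1 \<and>
           (\<forall>t\<in>{0..1}. loop_path c t = of_real (cmod (loop_path c t)) * cis (\<theta> t)) \<and>
           (\<forall>t\<in>{0..1}. loop_path c t \<in> DD)"
proof -
  define p where "p = loop_path c"
  have pD: "\<And>t. p t \<in> DD" unfolding p_def loop_path_def using img by auto
  have pc: "continuous_on {0..1} p" unfolding p_def using cont_loop_path[OF cc] .
  define w where "w = (\<lambda>t. p t * cis (-(\<phi> + pi)))"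
  have wnz: "w t \<notin> \<real>\<^sub>\<le>\<^sub>0" for t
  proof
    assume "w t \<in> \<real>\<^sub>\<le>\<^sub>0"
    hence re: "Re (w t) \<le> 0" "Im (w t) = 0" by (auto simp: complex_nonpos_Reals_iff)
    have "p t \<noteq> 0" using pD[of t] unfolding DD_def by auto
    hence "w t \<noteq> 0" unfolding w_def by simp
    hence neg: "Re (w t) < 0" using re complex_eq_iff by force
    have wt: "w t = of_real (Re (w t))" using re by (simp add: complex_eq_iff)
    have "p t = w t * cis (\<phi> + pi)" unfolding w_def by (simp add: mult.assoc cis_mult)
    also have "\<dots> = of_real (- Re (w t)) * cis \<phi>"
      by (subst wt) (simp add: minus_cis[symmetric])
    finally have "c (cis (2 * pi * t)) = of_real (- Re (w t)) * cis \<phi>"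
      unfolding p_def loop_path_def .
    moreover have "cis (2 * pi * t) \<in> sphere 0 1" by simp
    moreover have "- Re (w t) > 0" using neg by simp
    ultimately show False using miss by blast
  qed
  define \<theta> where "\<theta> = (\<lambda>t. \<phi> + pi + Arg (w t))"
  have "continuous_on {0..1} \<theta>" unfolding \<theta>_def w_def
    using wnz unfolding w_def by (intro continuous_intros pc) auto
  moreover have "\<theta> 0 = \<theta> 1" unfolding \<theta>_def w_def p_def loop_path_def by simp
  moreover have "loop_path c t = of_real (cmod (loop_path c t)) * cis (\<theta> t)" for t
  proof -
    have w: "w t = of_real (cmod (w t)) * cis (Arg (w t))" using rcis_cmod_Arg[of "w t"] by (simp add: rcis_def)
    have cm: "cmod (w t) = cmod (p t)" unfolding w_def by (simp add: norm_mult)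
    have "p t = w t * cis (\<phi> + pi)" unfolding w_def by (simp add: mult.assoc cis_mult)
    also have "\<dots> = of_real (cmod (p t)) * (cis (Arg (w t)) * cis (\<phi> + pi))"
      by (subst w) (simp add: cm mult.assoc)
    also have "\<dots> = of_real (cmod (p t)) * cis (\<theta> t)" unfolding \<theta>_def by (simp add: cis_mult algebra_simps)
    finally show ?thesis unfolding p_def .
  qed
  ultimately show ?thesis using pD unfolding p_def by blast
qed


lemma ccw_props:
  assumes a: "cmod a = 1" and b: "cmod b = 1"
  shows "0 < ccw_angle a b" "ccw_angle a b \<le> 2*pi" "b = a * cis (ccw_angle a b)"
proof -
  have A: "-pi < Arg a" "Arg a \<le> pi" "-pi < Arg b" "Arg b \<le> pi" using Arg_bounded by auto
  show "0 < ccw_angle a b" "ccw_angle a b \<le> 2*pi" unfolding ccw_angle_def Let_def using A by auto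
  have "a * cis (ccw_angle a b) = cis (Arg a) * cis (Arg b - Arg a)"
  proof (cases "Arg b - Arg a \<le> 0")
    case True
    have "cis (Arg b - Arg a + 2 * pi) = cis (Arg b - Arg a)" by (simp flip: cis_mult)
    thus ?thesis using True unfolding ccw_angle_def Let_def using unit_cis_Arg[OF a] by simp
  next
    case False thus ?thesis unfolding ccw_angle_def Let_def using unit_cis_Arg[OF a] by simp
  qed
  also have "\<dots> = cis (Arg b)" by (simp add: cis_mult)
  also have "\<dots> = b" using unit_cis_Arg[OF b] .
  finally show "b = a * cis (ccw_angle a b)" by simp
qed

lemma gap_props:
  assumes qs: "\<forall>j<J. q j \<in> sphere 0 1" and j: "j < J"
  shows "0 < gap_angle q J j" "gap_angle q J j \<le> 2*pi" "q (Suc j mod J) = q j * cis (gap_angle q J j)"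
proof -
  have "Suc j mod J < J" using j by simp
  hence "cmod (q (Suc j mod J)) = 1" "cmod (q j) = 1" using qs j by auto
  thus "0 < gap_angle q J j" "gap_angle q J j \<le> 2*pi" "q (Suc j mod J) = q j * cis (gap_angle q J j)"
    unfolding gap_angle_def using ccw_props by auto
qed

definition Pos :: "(nat \<Rightarrow> complex) \<Rightarrow> nat \<Rightarrow> nat \<Rightarrow> real" where
  "Pos q J j = (\<Sum>i<j. gap_angle q J i)"

lemma pos_q:
  assumes qs: "\<forall>j<J. q j \<in> sphere 0 1"
  shows "j < J \<Longrightarrow> q j = q 0 * cis (Pos q J j)"
proof (induction j)
  case 0 thus ?case by (simp add: Pos_def)
next
  case (Suc j)
  hence j: "j < J" by simp
  have "Suc j mod J = Suc j" using Suc.prems by simp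
  hence "q (Suc j) = q j * cis (gap_angle q J j)" using gap_props(3)[OF qs j] by simp
  also have "\<dots> = q 0 * cis (Pos q J j) * cis (gap_angle q J j)" using Suc.IH j by simp
  also have "\<dots> = q 0 * cis (Pos q J (Suc j))" by (simp add: Pos_def cis_mult mult.assoc)
  finally show ?case .
qed

lemma pos_step:
  assumes qs: "\<forall>j<J. q j \<in> sphere 0 1" and j: "j < J"
  shows "Pos q J (Suc j) = Pos q J j + gap_angle q J j"
  by (simp add: Pos_def)

lemma pos_mono:
  assumes qs: "\<forall>j<J. q j \<in> sphere 0 1"
  shows "i < j \<Longrightarrow> j \<le> J \<Longrightarrow> Pos q J i < Pos q J j"
proof (induction j)
  case 0 thus ?case by simp
next
  case (Suc j)
  have g: "0 < gap_angle q J j" using gap_props(1)[OF qs] Suc.prems by simp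
  show ?case
  proof (cases "i = j")
    case True thus ?thesis using g by (simp add: Pos_def)
  next
    case False
    hence "Pos q J i < Pos q J j" using Suc by simp
    thus ?thesis using g by (simp add: Pos_def)
  qed
qed

lemma allrays_lb:
  assumes img: "c ` sphere 0 1 \<subseteq> DD"
    and all: "\<forall>n\<in>{0..<6::int}. \<exists>z\<in>sphere 0 1. \<exists>r>0. c z = of_real r * cis (of_int n * pi / 3)"
  shows "6 \<le> Wd c"
proof -
  obtain zf rf where zf: "\<And>n. n \<in> {0..<6::int} \<Longrightarrow> zf n \<in> sphere 0 1 \<and> rf n > 0 \<and>
      c (zf n) = of_real (rf n) * cis (of_int n * pi / 3)"
    using all by metis
  define Z where "Z = {z \<in> sphere 0 1. c z \<in> branch}"
  have sub: "zf ` {0..<6} \<subseteq> Z"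
  proof
    fix z assume "z \<in> zf ` {0..<6}"
    then obtain n where n: "n \<in> {0..<6::int}" "z = zf n" by auto
    have "zf n \<in> sphere 0 1" using zf[OF n(1)] by blast
    hence "c z \<in> DD" using img n(2) by blast
    thus "z \<in> Z" unfolding Z_def branch_def using zf[OF n(1)] n(2) by blast
  qed
  have inj: "inj_on zf {0..<6}"
  proof (rule inj_onI)
    fix n m assume n: "n \<in> {0..<6::int}" and m: "m \<in> {0..<6::int}" and e: "zf n = zf m"
    have eq: "of_real (rf n) * cis (of_int n * pi / 3) = of_real (rf m) * cis (of_int m * pi / 3)"
      using zf[OF n] zf[OF m] e by metis
    hence "cmod (of_real (rf n) * cis (of_int n * pi / 3)) = cmod (of_real (rf m) * cis (of_int m * pi / 3))"
      by simp
    hence "rf n = rf m" using zf[OF n] zf[OF m] by (simp add: norm_mult)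
    hence "cis (of_int n * pi / 3) = cis (of_int m * pi / 3)" using eq zf[OF n] by simp
    then obtain k::int where k: "of_int n * pi / 3 = of_int m * pi / 3 + 2 * pi * of_int k"
      using cis_eq_imp by blast
    hence "of_int n * pi = (of_int m + 6 * of_int k) * pi" by (simp add: algebra_simps)
    hence "(of_int n :: real) = of_int m + 6 * of_int k" using pi_neq_zero by simp
    hence "(of_int n :: real) = of_int (m + 6 * k)" by simp
    hence "n = m + 6 * k" using of_int_eq_iff by blast
    thus "n = m" using n m by auto
  qed
  show ?thesis
  proof (cases "finite Z")
    case True
    have "card (zf ` {0..<6}) \<le> card Z" using card_mono[OF True sub] .
    hence "6 \<le> card Z" using card_image[OF inj] by simp
    thus ?thesis using True unfolding Wd_def Z_def[symmetric] Let_def by simp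
  next
    case False thus ?thesis unfolding Wd_def Z_def[symmetric] Let_def by simp
  qed
qed

lemma slit_lb:
  assumes qs: "\<forall>j<J. q j \<in> sphere 0 1" and J: "J \<ge> 1"
    and cyc: "cycle_rel q J c"
    and miss: "\<And>z r. z \<in> sphere 0 1 \<Longrightarrow> r > 0 \<Longrightarrow> c z \<noteq> of_real r * cis \<phi>"
  shows "\<exists>lo hi. lo \<le> hi \<and> enat (cnt lo hi) \<le> Wd c \<and>
           (pi \<le> hi - lo \<or> (\<exists>i<J. pi < gap_angle q J i \<and> 2*pi - gap_angle q J i \<le> hi - lo \<and> cis hi = q i))"
proof -
  have cc: "continuous_on (sphere 0 1) c" and img: "c ` sphere 0 1 \<subseteq> DD" using cyc unfolding cycle_rel_def by auto
  obtain t where t: "\<forall>j<J. 0 \<le> t j \<and> t j < 1 \<and> loop_path c (t j) = q j"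
    using cyc unfolding cycle_rel_def by blast
  obtain \<theta> where th: "continuous_on {0..1} \<theta>" "\<theta> 0 = \<theta> 1"
    "\<forall>t\<in>{0..1}. loop_path c t = of_real (cmod (loop_path c t)) * cis (\<theta> t)"
    "\<forall>t\<in>{0..1}. loop_path c t \<in> DD"
    using slit_lift[OF cc img miss] by blast
  define x where "x = (\<lambda>j. \<theta> (t j))"
  have qx: "q j = cis (x j)" if "j < J" for j
  proof -
    have tj: "t j \<in> {0..1}" "loop_path c (t j) = q j" using t that by auto
    have "q j = of_real (cmod (q j)) * cis (x j)" using th(3) tj unfolding x_def by metis
    moreover have "cmod (q j) = 1" using qs that by auto
    ultimately show ?thesis by simp
  qed
  define X where "X = x ` {..<J}"
  have "0 \<in> {..<J}" using J by simp
  hence Xf: "finite X" "X \<noteq> {}" unfolding X_def by auto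
  define lo where "lo = Min X"
  define hi where "hi = Max X"
  obtain jl where jl: "jl < J" "x jl = lo" using Min_in[OF Xf] unfolding lo_def X_def by auto
  obtain i where i: "i < J" "x i = hi" using Max_in[OF Xf] unfolding hi_def X_def by auto
  have bnd: "lo \<le> x j \<and> x j \<le> hi" if "j < J" for j
    unfolding lo_def hi_def using Xf that X_def by auto
  have le: "lo \<le> hi" using bnd[OF i(1)] by simp
  have lb: "enat (cnt lo hi) \<le> Wd c"
    by (rule hits_lb[OF th(1) th(2)]) (use th(3,4) t jl i le in \<open>auto simp: x_def\<close>)
  show ?thesis
  proof (cases "pi \<le> hi - lo")
    case True thus ?thesis using le lb by blast
  next
    case False
    define j' where "j' = Suc i mod J"
    have j': "j' < J" unfolding j'_def using J by simp
    have g: "0 < gap_angle q J i" "gap_angle q J i \<le> 2*pi" "q j' = q i * cis (gap_angle q J i)"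
      using gap_props[OF qs i(1)] unfolding j'_def by auto
    have "cis (hi + gap_angle q J i) = cis (x j')"
      using g(3) qx[OF j'] qx[OF i(1)] i(2) by (simp add: cis_mult)
    then obtain m::int where m: "hi + gap_angle q J i = x j' + 2 * pi * of_int m" using cis_eq_imp by blast
    have bj: "lo \<le> x j'" "x j' \<le> hi" using bnd[OF j'] by auto
    have "0 < 2 * pi * of_int m" using m bj g by linarith
    hence m0: "0 < m" using pi_gt_zero by (simp add: zero_less_mult_iff)
    have "2 * pi * of_int m < 2 * pi * 2" using m bj g False by linarith
    hence "m < 2" using pi_gt_zero by simp
    hence "m = 1" using m0 by simp
    hence "pi < gap_angle q J i \<and> 2*pi - gap_angle q J i \<le> hi - lo \<and> cis hi = q i"
      using m bj False qx[OF i(1)] i(2) by auto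
    thus ?thesis using le lb i(1) by blast
  qed
qed

lemma cycle_lb:
  assumes qs: "\<forall>j<J. q j \<in> sphere 0 1" and J: "J \<ge> 1"
    and cyc: "cycle_rel q J c"
  shows "6 \<le> Wd c \<or> (\<exists>lo hi. lo \<le> hi \<and> enat (cnt lo hi) \<le> Wd c \<and>
           (pi \<le> hi - lo \<or> (\<exists>i<J. pi < gap_angle q J i \<and> 2*pi - gap_angle q J i \<le> hi - lo \<and> cis hi = q i)))"
proof (cases "\<forall>n\<in>{0..<6::int}. \<exists>z\<in>sphere 0 1. \<exists>r>0. c z = of_real r * cis (of_int n * pi / 3)")
  case True
  have "c ` sphere 0 1 \<subseteq> DD" using cyc unfolding cycle_rel_def by auto
  thus ?thesis using allrays_lb True by blast
next
  case False
  then obtain n where "\<And>z r. z \<in> sphere 0 1 \<Longrightarrow> r > 0 \<Longrightarrow> c z \<noteq> of_real r * cis (of_int n * pi / 3)"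
    by blast
  from slit_lb[OF qs J cyc this] show ?thesis by blast
qed


lemma winding_rot_circle:
  assumes q0: "cmod q0 = 1"
  shows "winding_number (\<lambda>t. q0 * cis (2 * pi * t)) 0 = 1"
proof -
  define \<alpha> where "\<alpha> = Arg q0"
  have qa: "q0 = cis \<alpha>" using unit_cis_Arg[OF q0] unfolding \<alpha>_def by simp
  have ab: "-pi < \<alpha>" "\<alpha> \<le> pi" using Arg_bounded unfolding \<alpha>_def by auto
  define s where "s = (if 0 \<le> \<alpha> then \<alpha> / (2*pi) else \<alpha> / (2*pi) + 1)"
  have s01: "s \<in> {0..1}" unfolding s_def using ab pi_gt_zero by (auto simp: field_simps)
  have s2: "cis (2 * pi * s) = cis \<alpha>"
  proof (cases "0 \<le> \<alpha>")
    case True thus ?thesis unfolding s_def by simp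
  next
    case False
    have "2 * pi * s = \<alpha> + 2 * pi" unfolding s_def using False by (simp add: field_simps)
    thus ?thesis by (simp flip: cis_mult)
  qed
  have circ: "circlepath 0 1 = (\<lambda>x. cis (2 * pi * x))"
    unfolding circlepath by (auto simp: cis_conv_exp algebra_simps)
  have "shiftpath s (circlepath 0 1) = (\<lambda>t. q0 * cis (2 * pi * t))"
  proof
    fix x
    have a: "cis (2 * pi * (s + x)) = q0 * cis (2 * pi * x)"
      using s2 qa by (simp add: distrib_left cis_mult[symmetric])
    have b: "cis (2 * pi * (s + x - 1)) = cis (2 * pi * (s + x))"
      by (simp add: right_diff_distrib cis_mult[symmetric] cis_divide[symmetric])
    show "shiftpath s (circlepath 0 1) x = q0 * cis (2 * pi * x)"
      unfolding shiftpath_def circ using a b by simp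
  qed
  moreover have "winding_number (shiftpath s (circlepath 0 1)) 0 = winding_number (circlepath 0 1) 0"
    by (rule winding_number_shiftpath) (use s01 in auto)
  moreover have "winding_number (circlepath 0 1) 0 = 1" by (rule winding_number_circlepath_centre) simp
  ultimately show ?thesis by simp
qed

lemma c1_props:
  assumes qs: "\<forall>j<J. q j \<in> sphere 0 1" and J: "J \<ge> 1"
    and sum: "(\<Sum>j<J. gap_angle q J j) = 2 * pi"
  shows "cycle_rel q J (\<lambda>z. q 0 * z)" "embedded (\<lambda>z. q 0 * z)"
    "winding (\<lambda>z. q 0 * z) = 1" "Wd (\<lambda>z. q 0 * z) \<le> 6"
proof -
  have q0: "cmod (q 0) = 1" using qs J by auto
  have PJ: "Pos q J J = 2 * pi" using sum unfolding Pos_def .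
  have P0: "Pos q J 0 = 0" unfolding Pos_def by simp
  have Pge: "0 \<le> Pos q J j" if "j \<le> J" for j
    using pos_mono[OF qs, of 0 j] that P0 by (cases "j = 0") auto
  have Plt: "Pos q J j < 2 * pi" if "j < J" for j using pos_mono[OF qs, of j J] that PJ by auto
  show "cycle_rel q J (\<lambda>z. q 0 * z)"
    unfolding cycle_rel_def
  proof (intro conjI exI[of _ "\<lambda>j. Pos q J j / (2 * pi)"])
    show "continuous_on (sphere 0 1) (\<lambda>z. q 0 * z)" by (intro continuous_intros)
    show "(\<lambda>z. q 0 * z) ` sphere 0 1 \<subseteq> DD" unfolding DD_def using q0 by (auto simp: norm_mult)
    show "\<forall>j<J. 0 \<le> Pos q J j / (2 * pi) \<and> Pos q J j / (2 * pi) < 1 \<and>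
          loop_path (\<lambda>z. q 0 * z) (Pos q J j / (2 * pi)) = q j"
    proof (intro allI impI conjI)
      fix j assume j: "j < J"
      show "0 \<le> Pos q J j / (2 * pi)" using Pge[of j] j pi_gt_zero by simp
      show "Pos q J j / (2 * pi) < 1" using Plt[OF j] pi_gt_zero by simp
      have "2 * pi * (Pos q J j / (2 * pi)) = Pos q J j" using pi_gt_zero by simp
      thus "loop_path (\<lambda>z. q 0 * z) (Pos q J j / (2 * pi)) = q j"
        unfolding loop_path_def using pos_q[OF qs j] by simp
    qed
    show "\<forall>i j. i < j \<and> j < J \<longrightarrow> Pos q J i / (2 * pi) < Pos q J j / (2 * pi)"
    proof (intro allI impI)
      fix i j assume "i < j \<and> j < J"
      hence "Pos q J i < Pos q J j" using pos_mono[OF qs, of i j] by simp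
      thus "Pos q J i / (2 * pi) < Pos q J j / (2 * pi)" using pi_gt_zero by (simp add: divide_strict_right_mono)
    qed
  qed
  show "embedded (\<lambda>z. q 0 * z)" unfolding embedded_def using q0 by (auto simp: inj_on_def)
  show "winding (\<lambda>z. q 0 * z) = 1" unfolding winding_def loop_path_def using winding_rot_circle[OF q0] .
  define Z where "Z = {z \<in> sphere 0 1. q 0 * z \<in> branch}"
  have sub: "Z \<subseteq> (\<lambda>n. cis (of_int n * pi / 3) / q 0) ` {0..<6}"
  proof
    fix z assume "z \<in> Z"
    then obtain n::int and r where z: "cmod z = 1" "r > 0" "q 0 * z = of_real r * cis (of_int n * pi / 3)"
      unfolding Z_def branch_def by auto
    have "cmod (q 0 * z) = 1" using z(1) q0 by (simp add: norm_mult)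
    moreover have "cmod (of_real r * cis (of_int n * pi / 3)) = r" using z(2) by (simp add: norm_mult)
    ultimately have "r = 1" using z(3) by simp
    have "of_int n * pi / 3 = of_int (n mod 6) * pi / 3 + 2 * pi * of_int (n div 6)"
    proof -
      have "n = n mod 6 + 6 * (n div 6)" by simp
      hence "(of_int n :: real) = of_int (n mod 6) + 6 * of_int (n div 6)" by (metis of_int_add of_int_mult of_int_numeral)
      thus ?thesis by (simp add: field_simps)
    qed
    hence "cis (of_int n * pi / 3) = cis (of_int (n mod 6) * pi / 3 + 2 * pi * of_int (n div 6))"
      by (rule arg_cong)
    also have "\<dots> = cis (of_int (n mod 6) * pi / 3) * cis (2 * pi * of_int (n div 6))"
      by (rule cis_mult[symmetric])
    also have "\<dots> = cis (of_int (n mod 6) * pi / 3)" by simp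
    finally have "cis (of_int n * pi / 3) = cis (of_int (n mod 6) * pi / 3)" .
    hence "z = cis (of_int (n mod 6) * pi / 3) / q 0" using z \<open>r = 1\<close> q0
      by (metis nonzero_mult_div_cancel_left norm_zero zero_neq_one of_real_1 mult_1)
    moreover have "n mod 6 \<in> {0..<6}" by simp
    ultimately show "z \<in> (\<lambda>n. cis (of_int n * pi / 3) / q 0) ` {0..<6}" by blast
  qed
  have fin: "finite Z" using sub finite_subset by blast
  have "card Z \<le> card ((\<lambda>n. cis (of_int n * pi / 3) / q 0) ` {0..<6::int})"
    by (rule card_mono[OF _ sub]) simp
  also have "\<dots> \<le> card {0..<6::int}" by (rule card_image_le) simp
  finally have "card Z \<le> (6::nat)" by simp
  thus "Wd (\<lambda>z. q 0 * z) \<le> 6" using fin unfolding Wd_def Z_def[symmetric] Let_def by (simp add: numeral_eq_enat)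
qed


definition rad :: "complex \<Rightarrow> real" where "rad w = 1 - (\<bar>Im w\<bar> - Im w) / 4"
definition ang :: "real \<Rightarrow> real \<Rightarrow> complex \<Rightarrow> real" where "ang A B w = A + (B - A) * (1 - Re w) / 2"
definition Fc :: "real \<Rightarrow> real \<Rightarrow> complex \<Rightarrow> complex" where
  "Fc A B w = of_real (rad w) * cis (ang A B w)"

lemma Fc_cont: "continuous_on S (Fc A B)"
  unfolding Fc_def rad_def ang_def by (intro continuous_intros) auto

lemma rad_bounds: "cmod w = 1 \<Longrightarrow> 1/2 \<le> rad w \<and> rad w \<le> 1"
  using abs_Im_le_cmod[of w] unfolding rad_def by auto

lemma norm_Fc: "cmod w = 1 \<Longrightarrow> cmod (Fc A B w) = rad w"
  using rad_bounds[of w] unfolding Fc_def by (simp add: norm_mult)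

lemma Fc_DD: "cmod w = 1 \<Longrightarrow> Fc A B w \<in> DD"
  using norm_Fc[of w A B] rad_bounds[of w] unfolding DD_def by auto

lemma ang_bounds: "cmod w = 1 \<Longrightarrow> A \<le> B \<Longrightarrow> A \<le> ang A B w \<and> ang A B w \<le> B"
proof -
  assume w: "cmod w = 1" and AB: "A \<le> B"
  have "\<bar>Re w\<bar> \<le> 1" using abs_Re_le_cmod[of w] w by simp
  hence "0 \<le> 1 - Re w" "1 - Re w \<le> 2" by auto
  moreover have "0 \<le> B - A" using AB by simp
  ultimately have "0 \<le> (B - A) * (1 - Re w)" by simp
  moreover have "(B - A) * (1 - Re w) \<le> (B - A) * 2"
    by (rule mult_left_mono) (use \<open>1 - Re w \<le> 2\<close> AB in auto)
  ultimately show ?thesis unfolding ang_def by (simp add: field_simps)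
qed

lemma unit_sq: "cmod w = 1 \<Longrightarrow> (Re w)\<^sup>2 + (Im w)\<^sup>2 = 1"
  by (metis cmod_power2 one_power2)

lemma Fc_inj:
  assumes AB: "0 < B - A" "B - A < pi"
  shows "inj_on (Fc A B) (sphere 0 1)"
proof (rule inj_onI)
  fix w1 w2 assume w1: "w1 \<in> sphere 0 1" and w2: "w2 \<in> sphere 0 1" and e: "Fc A B w1 = Fc A B w2"
  have n1: "cmod w1 = 1" and n2: "cmod w2 = 1" using w1 w2 by auto
  have r: "rad w1 = rad w2" using norm_Fc[OF n1, of A B] norm_Fc[OF n2, of A B] e by simp
  have rp: "rad w1 > 0" using rad_bounds[OF n1] by simp
  have "cis (ang A B w1) = cis (ang A B w2)" using e r rp unfolding Fc_def by simp
  then obtain k::int where k: "ang A B w1 = ang A B w2 + 2 * pi * of_int k" using cis_eq_imp by blast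
  have b1: "A \<le> ang A B w1 \<and> ang A B w1 \<le> B" and b2: "A \<le> ang A B w2 \<and> ang A B w2 \<le> B"
    using ang_bounds[OF n1] ang_bounds[OF n2] AB by auto
  have "\<bar>2 * pi * of_int k\<bar> < pi" using k b1 b2 AB by auto
  hence "\<bar>of_int k\<bar> < (1/2::real)" using pi_gt_zero by (simp add: abs_mult)
  hence "k = 0" by linarith
  hence "ang A B w1 = ang A B w2" using k by simp
  hence "(B - A) * (1 - Re w1) = (B - A) * (1 - Re w2)" unfolding ang_def by simp
  hence re: "Re w1 = Re w2" using AB by simp
  have "(Im w1)\<^sup>2 = (Im w2)\<^sup>2" using unit_sq[OF n1] unit_sq[OF n2] re by simp
  hence "Im w1 = Im w2 \<or> Im w1 = - Im w2" by (simp add: power2_eq_iff)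
  moreover have "\<bar>Im w1\<bar> - Im w1 = \<bar>Im w2\<bar> - Im w2" using r unfolding rad_def by simp
  ultimately have "Im w1 = Im w2" by auto
  thus "w1 = w2" using re by (simp add: complex_eq_iff)
qed

lemma Fc_halfplane:
  assumes AB: "0 < B - A" "B - A < pi" and w: "cmod w = 1"
  shows "0 < Re (Fc A B w * cis (- ((A + B) / 2)))"
proof -
  have "Fc A B w * cis (- ((A + B) / 2)) = of_real (rad w) * cis (ang A B w - (A + B) / 2)"
    unfolding Fc_def by (simp add: mult.assoc cis_mult)
  hence e: "Re (Fc A B w * cis (- ((A + B) / 2))) = rad w * cos (ang A B w - (A + B) / 2)" by simp
  have "A \<le> ang A B w \<and> ang A B w \<le> B" using ang_bounds[OF w] AB by auto
  hence h: "A \<le> ang A B w" "ang A B w \<le> B" by auto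
  have "- (pi/2) < ang A B w - (A + B) / 2" using h AB by (simp add: field_simps)
  moreover have "ang A B w - (A + B) / 2 < pi/2" using h AB by (simp add: field_simps)
  ultimately have "0 < cos (ang A B w - (A + B) / 2)" by (rule cos_gt_zero_pi)
  moreover have "0 < rad w" using rad_bounds[OF w] by simp
  ultimately show ?thesis using e by simp
qed

lemma Fc_top:
  assumes "0 \<le> s" "s \<le> 1/2"
  shows "Fc A B (cis (2 * pi * s)) = cis (A + (B - A) * (1 - cos (2 * pi * s)) / 2)"
proof -
  have "0 \<le> sin (2 * pi * s)" using assms pi_gt_zero by (intro sin_ge_zero) auto
  hence "rad (cis (2 * pi * s)) = 1" unfolding rad_def by simp
  thus ?thesis unfolding Fc_def ang_def by simp
qed

lemma rot_sphere: "cmod \<omega> = 1 \<Longrightarrow> z \<in> sphere 0 1 \<Longrightarrow> z * \<omega> \<in> sphere 0 1"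
  by (simp add: norm_mult)

lemma rotF_basic:
  assumes om: "cmod \<omega> = 1"
  shows "continuous_on (sphere 0 1) (\<lambda>z. Fc A B (z * \<omega>))"
    "(\<lambda>z. Fc A B (z * \<omega>)) ` sphere 0 1 \<subseteq> DD"
proof -
  show "continuous_on (sphere 0 1) (\<lambda>z. Fc A B (z * \<omega>))"
    by (rule continuous_on_compose2[OF Fc_cont[of UNIV]]) (auto intro!: continuous_intros)
  show "(\<lambda>z. Fc A B (z * \<omega>)) ` sphere 0 1 \<subseteq> DD"
    using Fc_DD om by (auto simp: norm_mult)
qed

lemma rotF_embedded:
  assumes om: "cmod \<omega> = 1" and AB: "0 < B - A" "B - A < pi"
  shows "embedded (\<lambda>z. Fc A B (z * \<omega>))"
  unfolding embedded_def
proof (rule inj_onI)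
  fix x y assume x: "x \<in> sphere 0 1" and y: "y \<in> sphere 0 1" and e: "Fc A B (x * \<omega>) = Fc A B (y * \<omega>)"
  have "x * \<omega> = y * \<omega>" using inj_onD[OF Fc_inj[OF AB] e] rot_sphere[OF om] x y by blast
  thus "x = y" using om by auto
qed

lemma rotF_winding:
  assumes om: "cmod \<omega> = 1" and AB: "0 < B - A" "B - A < pi"
  shows "winding (\<lambda>z. Fc A B (z * \<omega>)) = 0"
proof -
  define c where "c = (\<lambda>z. Fc A B (z * \<omega>))"
  define S where "S = {z. 0 < Re (z * cis (- ((A + B) / 2)))}"
  have "path (loop_path c)" unfolding path_def c_def using cont_loop_path rotF_basic(1)[OF om] by blast
  moreover have "convex S" unfolding S_def convex_def
  proof (intro allI impI ballI, clarify)
    fix x y :: complex and u v :: real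
    assume x: "0 < Re (x * cis (- ((A + B) / 2)))" and y: "0 < Re (y * cis (- ((A + B) / 2)))"
      and uv: "0 \<le> u" "0 \<le> v" "u + v = 1"
    have "Re ((u *\<^sub>R x + v *\<^sub>R y) * cis (- ((A + B) / 2))) =
          u * Re (x * cis (- ((A + B) / 2))) + v * Re (y * cis (- ((A + B) / 2)))"
      by (simp add: scaleR_conv_of_real algebra_simps)
    moreover have "0 < u * Re (x * cis (- ((A + B) / 2))) + v * Re (y * cis (- ((A + B) / 2)))"
    proof (cases "u = 0")
      case True thus ?thesis using uv y by simp
    next
      case False
      hence "0 < u * Re (x * cis (- ((A + B) / 2)))" using uv x by simp
      moreover have "0 \<le> v * Re (y * cis (- ((A + B) / 2)))" using uv y by simp
      ultimately show ?thesis by simp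
    qed
    ultimately show "0 < Re ((u *\<^sub>R x + v *\<^sub>R y) * cis (- ((A + B) / 2)))" by simp
  qed
  moreover have "pathfinish (loop_path c) = pathstart (loop_path c)"
    unfolding pathfinish_def pathstart_def loop_path_def by simp
  moreover have "0 \<notin> S" unfolding S_def by simp
  moreover have "path_image (loop_path c) \<subseteq> S"
  proof
    fix p assume "p \<in> path_image (loop_path c)"
    then obtain t where p: "p = Fc A B (cis (2 * pi * t) * \<omega>)" unfolding path_image_def loop_path_def c_def by auto
    have "cmod (cis (2 * pi * t) * \<omega>) = 1" using om by (simp add: norm_mult)
    thus "p \<in> S" unfolding S_def p using Fc_halfplane[OF AB] by simp
  qed
  ultimately have "winding_number (loop_path c) 0 = 0" by (rule winding_number_zero_outside)
  thus ?thesis unfolding winding_def c_def .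
qed


definition xr :: "real \<Rightarrow> real \<Rightarrow> int \<Rightarrow> real" where
  "xr A B n = 1 - 2 * (of_int n * pi / 3 - A) / (B - A)"
definition zlo :: "real \<Rightarrow> real \<Rightarrow> int \<Rightarrow> complex" where
  "zlo A B n = Complex (xr A B n) (- sqrt (1 - (xr A B n)\<^sup>2))"
definition zup :: "real \<Rightarrow> real \<Rightarrow> int \<Rightarrow> complex" where
  "zup A B n = Complex (xr A B n) (sqrt (1 - (xr A B n)\<^sup>2))"

lemma Fc_hits:
  assumes AB: "0 < B - A" "B - A < pi"
  shows "{w \<in> sphere 0 1. Fc A B w \<in> branch} \<subseteq> zlo A B ` CL A B \<union> zup A B ` OP A B"
proof
  fix w assume "w \<in> {w \<in> sphere 0 1. Fc A B w \<in> branch}"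
  then obtain n::int and r where w: "cmod w = 1" "r > 0" "Fc A B w = of_real r * cis (of_int n * pi / 3)"
    unfolding branch_def by auto
  have rp: "0 < rad w" using rad_bounds[OF w(1)] by simp
  have "rad w = r" using norm_Fc[OF w(1), of A B] w(2,3) by (simp add: norm_mult)
  hence "cis (ang A B w) = cis (of_int n * pi / 3)" using w(3) rp unfolding Fc_def by simp
  then obtain k::int where k: "ang A B w = of_int n * pi / 3 + 2 * pi * of_int k" using cis_eq_imp by blast
  define m where "m = n + 6 * k"
  have am: "ang A B w = of_int m * pi / 3" unfolding m_def k by (simp add: field_simps)
  have ab: "A \<le> ang A B w" "ang A B w \<le> B" using ang_bounds[OF w(1)] AB by auto
  hence mCL: "m \<in> CL A B" unfolding CL_def using am by simp
  have "(B - A) * (1 - Re w) / 2 = of_int m * pi / 3 - A" using am unfolding ang_def by simp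
  hence "Re w = xr A B m" unfolding xr_def using AB by (simp add: field_simps)
  note re = this
  have sq: "(Im w)\<^sup>2 = 1 - (xr A B m)\<^sup>2" using unit_sq[OF w(1)] re by simp
  show "w \<in> zlo A B ` CL A B \<union> zup A B ` OP A B"
  proof (cases "Im w \<le> 0")
    case True
    have "Im w = - sqrt (1 - (xr A B m)\<^sup>2)" using True sq by (metis real_sqrt_abs abs_of_nonpos minus_minus)
    hence "w = zlo A B m" unfolding zlo_def using re by (simp add: complex_eq_iff)
    thus ?thesis using mCL by blast
  next
    case False
    have "Im w = sqrt (1 - (xr A B m)\<^sup>2)" using False sq by (metis real_sqrt_abs abs_of_nonneg linear)
    hence "w = zup A B m" unfolding zup_def using re by (simp add: complex_eq_iff)
    moreover have "m \<in> OP A B"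
    proof -
      have "0 < (Im w)\<^sup>2" using False by simp
      hence "(Re w)\<^sup>2 < 1" using unit_sq[OF w(1)] by linarith
      hence "\<bar>Re w\<bar> < 1" by (simp add: abs_square_less_1)
      hence "0 < 1 - Re w" "1 - Re w < 2" by auto
      hence "0 < (B - A) * (1 - Re w)" using AB by simp
      moreover have "(B - A) * (1 - Re w) < (B - A) * 2"
        by (rule mult_strict_left_mono) (use \<open>1 - Re w < 2\<close> AB in auto)
      ultimately have "A < ang A B w" "ang A B w < B" unfolding ang_def by (simp_all add: field_simps)
      thus ?thesis unfolding OP_def using am by simp
    qed
    ultimately show ?thesis by blast
  qed
qed

lemma rotF_Wd:
  assumes om: "cmod \<omega> = 1" and AB: "0 < B - A" "B - A < pi"
  shows "Wd (\<lambda>z. Fc A B (z * \<omega>)) \<le> enat (cnt A B)"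
proof -
  define ZF where "ZF = {w \<in> sphere 0 1. Fc A B w \<in> branch}"
  define Z where "Z = {z \<in> sphere 0 1. Fc A B (z * \<omega>) \<in> branch}"
  have "Z \<subseteq> (\<lambda>w. w / \<omega>) ` ZF"
  proof
    fix z assume z: "z \<in> Z"
    hence "z * \<omega> \<in> ZF" unfolding Z_def ZF_def using rot_sphere[OF om] by auto
    moreover have "z = (z * \<omega>) / \<omega>" using om by auto
    ultimately show "z \<in> (\<lambda>w. w / \<omega>) ` ZF" by blast
  qed
  also have "\<dots> \<subseteq> (\<lambda>w. w / \<omega>) ` (zlo A B ` CL A B \<union> zup A B ` OP A B)"
    using Fc_hits[OF AB] unfolding ZF_def by (rule image_mono)
  finally have sub: "Z \<subseteq> (\<lambda>w. w / \<omega>) ` (zlo A B ` CL A B \<union> zup A B ` OP A B)" .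
  have fin: "finite Z" using finite_subset[OF sub] finite_CL finite_OP by blast
  have "card Z \<le> card ((\<lambda>w. w / \<omega>) ` (zlo A B ` CL A B \<union> zup A B ` OP A B))"
    by (rule card_mono[OF _ sub]) (simp add: finite_CL finite_OP)
  also have "\<dots> \<le> card (zlo A B ` CL A B \<union> zup A B ` OP A B)" by (rule card_image_le) (simp add: finite_CL finite_OP)
  also have "\<dots> \<le> card (zlo A B ` CL A B) + card (zup A B ` OP A B)" by (rule card_Un_le)
  also have "\<dots> \<le> card (CL A B) + card (OP A B)"
    by (intro add_mono card_image_le finite_CL finite_OP)
  finally have "card Z \<le> cnt A B" unfolding cnt_def .
  thus ?thesis using fin unfolding Wd_def Z_def[symmetric] Let_def by simp
qed


lemma two_gaps:
  assumes qs: "\<forall>j<J. q j \<in> sphere 0 1" and sum: "(\<Sum>j<J. gap_angle q J j) = 2 * pi"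
    and i: "i < J" and k: "k < J" and ik: "i \<noteq> k"
  shows "gap_angle q J i + gap_angle q J k \<le> 2 * pi"
proof -
  have "(\<Sum>j\<in>{i,k}. gap_angle q J j) \<le> (\<Sum>j<J. gap_angle q J j)"
    by (rule sum_mono2) (use i k gap_props(1)[OF qs] in \<open>auto intro: less_imp_le\<close>)
  thus ?thesis using ik sum by simp
qed

lemma lev_less:
  assumes "of_int a * pi / 3 < of_int b * pi / 3" shows "a < b"
proof (rule ccontr)
  assume "\<not> a < b" hence "of_int b \<le> (of_int a::real)" by simp
  hence "of_int b * pi / 3 \<le> of_int a * pi / 3" using pi_gt_zero by (intro divide_right_mono mult_right_mono) auto
  thus False using assms by simp
qed

lemma lev_le:
  assumes "a < b" shows "(of_int a + 1) * pi / 3 \<le> of_int b * pi / 3"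
proof -
  have "of_int a + 1 \<le> (of_int b::real)" using assms by linarith
  thus ?thesis using pi_gt_zero by (intro divide_right_mono mult_right_mono) auto
qed

lemma part1_J1:
  assumes qs: "\<forall>j<J. q j \<in> sphere 0 1" and J: "J = 1"
  shows "\<exists>c B. cycle_rel q J c \<and> embedded c \<and> winding c = 0 \<and> cis B = q 0 \<and>
           Wd c \<le> enat (cnt (B - (2 * pi - gap_angle q J 0)) B)"
proof -
  have q0: "cmod (q 0) = 1" using qs J by auto
  have g: "gap_angle q J 0 = 2 * pi" unfolding gap_angle_def ccw_angle_def J by simp
  define B where "B = Arg (q 0)"
  have cB: "cis B = q 0" unfolding B_def using unit_cis_Arg[OF q0] .
  define m where "m = \<lceil>3 * B / pi\<rceil> - 1"
  have m1: "of_int m < 3 * B / pi" "3 * B / pi \<le> of_int m + 1" unfolding m_def by linarith+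
  have m2: "of_int m * pi / 3 < B" "B \<le> (of_int m + 1) * pi / 3"
    using m1 pi_gt_zero by (simp_all add: field_simps)
  define A where "A = (of_int m * pi / 3 + B) / 2"
  have AB: "0 < B - A" "B - A < pi" using m2 pi_gt_zero unfolding A_def by (simp_all add: field_simps)
  have mA: "of_int m * pi / 3 < A" using m2 unfolding A_def by (simp add: field_simps)
  define c where "c = (\<lambda>z. Fc A B (z * (-1)))"
  have om: "cmod (-1::complex) = 1" by simp
  have "cycle_rel q J c" unfolding cycle_rel_def
  proof (intro conjI exI[of _ "\<lambda>j. 0"])
    show "continuous_on (sphere 0 1) c" unfolding c_def using rotF_basic(1)[OF om] .
    show "c ` sphere 0 1 \<subseteq> DD" unfolding c_def using rotF_basic(2)[OF om] .
    have "rad (-1) = 1" unfolding rad_def by simp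
    moreover have "ang A B (-1) = B" unfolding ang_def by (simp add: field_simps)
    ultimately have "Fc A B (-1) = q 0" unfolding Fc_def using cB by simp
    thus "\<forall>j<J. 0 \<le> (0::real) \<and> (0::real) < 1 \<and> loop_path c 0 = q j"
      unfolding loop_path_def c_def J by simp
    show "\<forall>i j. i < j \<and> j < J \<longrightarrow> (0::real) < 0" unfolding J by simp
  qed
  moreover have "embedded c" unfolding c_def by (rule rotF_embedded[OF om AB])
  moreover have "winding c = 0" unfolding c_def by (rule rotF_winding[OF om AB])
  moreover have "Wd c \<le> enat (cnt (B - (2 * pi - gap_angle q J 0)) B)"
  proof -
    have "Wd c \<le> enat (cnt A B)" unfolding c_def by (rule rotF_Wd[OF om AB])
    moreover have "cnt A B \<le> cnt B B"
    proof -
      have lev: "B \<le> of_int n * pi / 3" if "A < of_int n * pi / 3" for n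
      proof -
        have "of_int m * pi / 3 < of_int n * pi / 3" using that mA by linarith
        hence "m < n" by (rule lev_less)
        hence "(of_int m + 1) * pi / 3 \<le> of_int n * pi / 3" by (rule lev_le)
        thus ?thesis using m2 by linarith
      qed
      have "CL A B \<subseteq> CL B B"
      proof
        fix n assume "n \<in> CL A B"
        hence "A \<le> of_int n * pi / 3" "of_int n * pi / 3 \<le> B" unfolding CL_def by auto
        moreover have "A < of_int n * pi / 3"
        proof (rule ccontr)
          assume "\<not> A < of_int n * pi / 3"
          hence "of_int n * pi / 3 = A" using \<open>A \<le> of_int n * pi / 3\<close> by simp
          hence "of_int m * pi / 3 < of_int n * pi / 3" using mA by linarith
          hence "m < n" by (rule lev_less)
          hence "(of_int m + 1) * pi / 3 \<le> of_int n * pi / 3" by (rule lev_le)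
          thus False using m2 \<open>of_int n * pi / 3 = A\<close> AB by linarith
        qed
        ultimately show "n \<in> CL B B" using lev unfolding CL_def by auto
      qed
      moreover have "OP A B = {}" using lev unfolding OP_def by force
      ultimately have "card (CL A B) \<le> card (CL B B)" "card (OP A B) = 0" using card_mono[OF finite_CL] by auto
      thus ?thesis unfolding cnt_def by simp
    qed
    ultimately show ?thesis using g by (simp add: order_trans)
  qed
  ultimately show ?thesis using cB by blast
qed


lemma part1_J2:
  assumes qs: "\<forall>j<J. q j \<in> sphere 0 1" and J: "J \<ge> 2"
    and sum: "(\<Sum>j<J. gap_angle q J j) = 2 * pi"
    and k: "k < J" and big: "pi < gap_angle q J k"
  shows "\<exists>c B. cycle_rel q J c \<and> embedded c \<and> winding c = 0 \<and> cis B = q k \<and>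
           Wd c \<le> enat (cnt (B - (2 * pi - gap_angle q J k)) B)"
proof -
  define G where "G = gap_angle q J k"
  define L where "L = 2 * pi - G"
  define P where "P = Pos q J"
  have q0: "cmod (q 0) = 1" using qs J by auto
  have PJ: "P J = 2 * pi" using sum unfolding Pos_def P_def .
  have P0: "P 0 = 0" unfolding Pos_def P_def by simp
  have Pmono: "P i < P j" if "i < j" "j \<le> J" for i j using pos_mono[OF qs] that unfolding P_def by blast
  have Pmono': "P i \<le> P j" if "i \<le> j" "j \<le> J" for i j
    using Pmono[of i j] that by (cases "i = j") auto
  have Pge: "0 \<le> P j" if "j \<le> J" for j using Pmono'[of 0 j] that P0 by simp
  have Pk1: "P (Suc k) = P k + G" unfolding P_def G_def Pos_def by simp
  have Pk1J: "P (Suc k) \<le> 2 * pi" using Pmono'[of "Suc k" J] k PJ by simp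
  have Gpos: "G < 2 * pi"
  proof -
    define i where "i = (if k = 0 then 1 else 0::nat)"
    have i: "i < J" "i \<noteq> k" unfolding i_def using J by auto
    have "gap_angle q J i + G \<le> 2 * pi" unfolding G_def by (rule two_gaps[OF qs sum i(1) k i(2)])
    moreover have "0 < gap_angle q J i" using gap_props(1)[OF qs i(1)] .
    ultimately show ?thesis by simp
  qed
  have L: "0 < L" "L < pi" unfolding L_def using Gpos big G_def by auto
  define \<beta> where "\<beta> = Arg (q 0)"
  have cb: "cis \<beta> = q 0" unfolding \<beta>_def using unit_cis_Arg[OF q0] .
  define B where "B = \<beta> + P k"
  define A where "A = B - L"
  have AB: "0 < B - A" "B - A < pi" unfolding A_def using L by auto
  have cB: "cis B = q k" unfolding B_def using pos_q[OF qs k] cb unfolding P_def by (simp flip: cis_mult)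
  define \<rho> where "\<rho> = (\<lambda>j. if j \<le> k then P j + 2 * pi - P (Suc k) else P j - P (Suc k))"
  have rho_lo: "0 \<le> \<rho> j" if "j < J" for j
  proof (cases "j \<le> k")
    case True thus ?thesis unfolding \<rho>_def using Pge[of j] that Pk1J by simp
  next
    case False thus ?thesis unfolding \<rho>_def using Pmono'[of "Suc k" j] that by simp
  qed
  have rho_hi: "\<rho> j \<le> L" if "j < J" for j
  proof (cases "j \<le> k")
    case True thus ?thesis unfolding \<rho>_def L_def using Pmono'[of j k] k Pk1 by simp
  next
    case False
    have "P j < 2 * pi" using Pmono[of j J] that PJ by simp
    thus ?thesis unfolding \<rho>_def L_def using Pk1 Pge[of k] k False by simp
  qed
  have rho_0: "\<rho> 0 = 2 * pi - P (Suc k)" unfolding \<rho>_def using P0 by simp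
  have rho_after: "\<rho> j < \<rho> 0" if "j < J" "\<not> j \<le> k" for j
  proof -
    have "P j < 2 * pi" using Pmono[of j J] that PJ by simp
    thus ?thesis unfolding rho_0 unfolding \<rho>_def using that by simp
  qed
  have rho_ge0: "\<rho> 0 \<le> \<rho> j" if "j \<le> k" for j
    unfolding \<rho>_def using Pge[of j] that k P0 by simp
  have rho_mono: "\<rho> i < \<rho> j" if "i < j" "j < J" "j \<le> k \<or> \<not> i \<le> k" for i j
    unfolding \<rho>_def using Pmono[of i j] that by auto
  define arg where "arg = (\<lambda>j. 1 - 2 * \<rho> j / L)"
  have arg_b: "-1 \<le> arg j \<and> arg j \<le> 1" if "j < J" for j
    using rho_lo[OF that] rho_hi[OF that] L unfolding arg_def by (simp add: field_simps)
  define s where "s = (\<lambda>j. arccos (arg j) / (2 * pi))"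
  have s_b: "0 \<le> s j \<and> s j \<le> 1/2" if "j < J" for j
    using arccos_bounded[of "arg j"] arg_b[OF that] pi_gt_zero unfolding s_def by (simp add: field_simps)
  have s_lt: "s i < s j" if "\<rho> i < \<rho> j" "i < J" "j < J" for i j
  proof -
    have "arg j < arg i" using that L unfolding arg_def by (simp add: field_simps)
    hence "arccos (arg i) < arccos (arg j)"
      using arg_b[OF that(2)] arg_b[OF that(3)] by (intro arccos_less_arccos) auto
    thus ?thesis unfolding s_def using pi_gt_zero by (simp add: divide_strict_right_mono)
  qed
  have s_le: "s i \<le> s j" if "\<rho> i \<le> \<rho> j" "i < J" "j < J" for i j
    using s_lt[OF _ that(2,3)] that(1) by (cases "\<rho> i = \<rho> j") (auto simp: s_def arg_def)
  have J0: "0 < J" using J by simp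
  define \<tau> where "\<tau> = s 0"
  define T where "T = (\<lambda>j. if j \<le> k then s j - \<tau> else s j - \<tau> + 1)"
  define \<omega> where "\<omega> = cis (2 * pi * \<tau>)"
  have om: "cmod \<omega> = 1" unfolding \<omega>_def by simp
  define c where "c = (\<lambda>z. Fc A B (z * \<omega>))"
  have visit: "loop_path c (T j) = q j" if j: "j < J" for j
  proof -
    have cs: "cis (2 * pi * T j) * \<omega> = cis (2 * pi * s j)"
    proof (cases "j \<le> k")
      case True thus ?thesis unfolding T_def \<omega>_def by (simp add: cis_mult algebra_simps)
    next
      case False
      have "cis (2 * pi * T j) * \<omega> = cis (2 * pi * s j + 2 * pi)"
        unfolding T_def \<omega>_def using False by (simp add: cis_mult algebra_simps)
      also have "\<dots> = cis (2 * pi * s j)" by (simp flip: cis_mult)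
      finally show ?thesis .
    qed
    have "cos (2 * pi * s j) = arg j" unfolding s_def using arg_b[OF j] pi_gt_zero by simp
    hence "(B - A) * (1 - cos (2 * pi * s j)) / 2 = \<rho> j" unfolding arg_def A_def using L by (simp add: field_simps)
    hence "Fc A B (cis (2 * pi * s j)) = cis (A + \<rho> j)" using Fc_top[of "s j" A B] s_b[OF j] by simp
    also have "\<dots> = q j"
    proof (cases "j \<le> k")
      case True
      have "A + \<rho> j = \<beta> + P j" unfolding A_def B_def L_def \<rho>_def using True Pk1 by simp
      thus ?thesis using pos_q[OF qs j] cb unfolding P_def by (simp flip: cis_mult)
    next
      case False
      have "A + \<rho> j = \<beta> + P j + (- 2 * pi)" unfolding A_def B_def L_def \<rho>_def using False Pk1 by simp
      hence "cis (A + \<rho> j) = cis (\<beta> + P j) * cis (- 2 * pi)" by (simp only: cis_mult)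
      moreover have "cis (- 2 * pi) = 1" by (simp add: complex_eq_iff)
      ultimately have "cis (A + \<rho> j) = cis (\<beta> + P j)" by simp
      thus ?thesis using pos_q[OF qs j] cb unfolding P_def by (simp flip: cis_mult)
    qed
    finally show ?thesis unfolding loop_path_def c_def using cs by simp
  qed
  have T_range: "0 \<le> T j \<and> T j < 1" if j: "j < J" for j
  proof (cases "j \<le> k")
    case True
    have "s 0 \<le> s j" using s_le[OF rho_ge0[OF True] J0 j] .
    thus ?thesis unfolding T_def \<tau>_def using True s_b[OF j] s_b[OF J0] by simp
  next
    case False
    have "s j < s 0" using s_lt[OF rho_after[OF j False] j J0] .
    thus ?thesis unfolding T_def \<tau>_def using False s_b[OF j] s_b[OF J0] by simp
  qed
  have T_mono: "T i < T j" if "i < j" "j < J" for i j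
  proof -
    have i: "i < J" using that by simp
    consider "j \<le> k" | "\<not> i \<le> k" | "i \<le> k" "\<not> j \<le> k" by blast
    thus ?thesis
    proof cases
      case 1 thus ?thesis unfolding T_def using s_lt[OF rho_mono[OF that] i that(2)] that by auto
    next
      case 2 thus ?thesis unfolding T_def using s_lt[OF rho_mono[OF that] i that(2)] that by auto
    next
      case 3 thus ?thesis unfolding T_def using s_b[OF i] s_b[OF that(2)] by auto
    qed
  qed
  have "cycle_rel q J c" unfolding cycle_rel_def
  proof (intro conjI exI[of _ T])
    show "continuous_on (sphere 0 1) c" unfolding c_def using rotF_basic(1)[OF om] .
    show "c ` sphere 0 1 \<subseteq> DD" unfolding c_def using rotF_basic(2)[OF om] .
    show "\<forall>j<J. 0 \<le> T j \<and> T j < 1 \<and> loop_path c (T j) = q j" using T_range visit by blast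
    show "\<forall>i j. i < j \<and> j < J \<longrightarrow> T i < T j" using T_mono by blast
  qed
  moreover have "embedded c" unfolding c_def by (rule rotF_embedded[OF om AB])
  moreover have "winding c = 0" unfolding c_def by (rule rotF_winding[OF om AB])
  moreover have "Wd c \<le> enat (cnt (B - (2 * pi - gap_angle q J k)) B)"
    using rotF_Wd[OF om AB] unfolding c_def A_def L_def G_def .
  ultimately show ?thesis using cB by blast
qed


lemma six_enat: "(6::enat) = enat 6" by (simp add: numeral_eq_enat)

lemma part1_exists:
  assumes qs: "\<forall>j<J. q j \<in> sphere 0 1" and J: "J \<ge> 1"
    and sum: "(\<Sum>j<J. gap_angle q J j) = 2 * pi"
    and k: "k < J" and big: "pi < gap_angle q J k"
  shows "\<exists>c B. cycle_rel q J c \<and> embedded c \<and> winding c = 0 \<and> cis B = q k \<and>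
           Wd c \<le> enat (cnt (B - (2 * pi - gap_angle q J k)) B)"
proof (cases "J = 1")
  case True
  hence "k = 0" using k by simp
  thus ?thesis using part1_J1[OF qs True] by simp
next
  case False
  hence "J \<ge> 2" using J by simp
  thus ?thesis using part1_J2[OF qs _ sum k big] by blast
qed

theorem mainTheorem8:
  fixes q :: "nat \<Rightarrow> complex" and J :: nat
  assumes "J \<ge> 1"
    and "\<forall>j<J. q j \<in> sphere 0 1"
    and "inj_on q {..<J}"
    and "(\<Sum>j<J. gap_angle q J j) = 2 * pi"
  shows "((\<exists>j<J. gap_angle q J j > pi) \<longrightarrow>
            (\<exists>c. Wd_minimizing q J c \<and> embedded c \<and> monotone_cycle q J c \<and> winding c = 0))
       \<and> ((\<not> (\<exists>j<J. gap_angle q J j > pi)) \<longrightarrow>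
            (\<exists>c. Wd_minimizing q J c \<and> embedded c \<and> (winding c = 1 \<or> winding c = -1)))"
proof (intro conjI impI)
  note J = assms(1) and qs = assms(2) and sum = assms(4)
  assume "\<exists>j<J. gap_angle q J j > pi"
  then obtain k where k: "k < J" "pi < gap_angle q J k" by blast
  obtain c B where c: "cycle_rel q J c" "embedded c" "winding c = 0" "cis B = q k"
    "Wd c \<le> enat (cnt (B - (2 * pi - gap_angle q J k)) B)"
    using part1_exists[OF qs J sum k] by blast
  define L where "L = 2 * pi - gap_angle q J k"
  have L: "L < pi" unfolding L_def using k by simp
  have K6: "cnt (B - L) B \<le> 6" by (rule cnt_le6) (use L in simp)
  have "Wd c \<le> Wd c'" if c': "cycle_rel q J c'" for c'
  proof -
    have Wc: "Wd c \<le> enat (cnt (B - L) B)" using c(5) unfolding L_def .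
    from cycle_lb[OF qs J c'] show ?thesis
    proof
      assume "6 \<le> Wd c'"
      moreover have "enat (cnt (B - L) B) \<le> enat 6" using K6 by simp
      moreover note six_enat
      ultimately show ?thesis using Wc by (metis order_trans)
    next
      assume "\<exists>lo hi. lo \<le> hi \<and> enat (cnt lo hi) \<le> Wd c' \<and>
           (pi \<le> hi - lo \<or> (\<exists>i<J. pi < gap_angle q J i \<and> 2*pi - gap_angle q J i \<le> hi - lo \<and> cis hi = q i))"
      then obtain lo hi where lh: "lo \<le> hi" "enat (cnt lo hi) \<le> Wd c'"
        "pi \<le> hi - lo \<or> (\<exists>i<J. pi < gap_angle q J i \<and> 2*pi - gap_angle q J i \<le> hi - lo \<and> cis hi = q i)"
        by blast
      show ?thesis
      proof (cases "pi \<le> hi - lo")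
        case True
        have "cnt (B - L) B \<le> cnt lo hi" using K6 cnt_ge6[OF True] by simp
        hence "enat (cnt (B - L) B) \<le> enat (cnt lo hi)" by simp
        thus ?thesis using Wc lh(2) by (meson order_trans)
      next
        case False
        then obtain i where i: "i < J" "pi < gap_angle q J i" "2*pi - gap_angle q J i \<le> hi - lo" "cis hi = q i"
          using lh(3) by blast
        have "i = k"
        proof (rule ccontr)
          assume "i \<noteq> k"
          hence "gap_angle q J i + gap_angle q J k \<le> 2 * pi" by (rule two_gaps[OF qs sum i(1) k(1)])
          thus False using i(2) k(2) by simp
        qed
        have "cis hi = cis B" using i(4) c(4) \<open>i = k\<close> by simp
        then obtain m::int where m: "hi = B + 2 * pi * of_int m" using cis_eq_imp by blast
        have "cnt (hi - L) hi = cnt (B - L + 2 * pi * of_int m) (B + 2 * pi * of_int m)"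
          using m by (simp add: algebra_simps)
        also have "\<dots> = cnt (B - L) B" by (rule cnt_shift)
        finally have e: "cnt (hi - L) hi = cnt (B - L) B" .
        have "lo \<le> hi - L" using i(3) \<open>i = k\<close> unfolding L_def by simp
        hence "cnt (hi - L) hi \<le> cnt lo hi" by (rule cnt_mono)
        hence "enat (cnt (B - L) B) \<le> enat (cnt lo hi)" using e by simp
        thus ?thesis using Wc lh(2) by (meson order_trans)
      qed
    qed
  qed
  hence "Wd_minimizing q J c" unfolding Wd_minimizing_def using c(1) by blast
  moreover have "monotone_cycle q J c" unfolding monotone_cycle_def ccw_order_def using c(1) sum by blast
  ultimately show "\<exists>c. Wd_minimizing q J c \<and> embedded c \<and> monotone_cycle q J c \<and> winding c = 0"
    using c(2,3) by blast
next
  note J = assms(1) and qs = assms(2) and sum = assms(4)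
  assume nb: "\<not> (\<exists>j<J. gap_angle q J j > pi)"
  define c where "c = (\<lambda>z. q 0 * z)"
  have c: "cycle_rel q J c" "embedded c" "winding c = 1" "Wd c \<le> 6"
    using c1_props[OF qs J sum] unfolding c_def by auto
  have "Wd c \<le> Wd c'" if c': "cycle_rel q J c'" for c'
  proof -
    from cycle_lb[OF qs J c'] show ?thesis
    proof
      assume "6 \<le> Wd c'" thus ?thesis using c(4) by (meson order_trans)
    next
      assume "\<exists>lo hi. lo \<le> hi \<and> enat (cnt lo hi) \<le> Wd c' \<and>
           (pi \<le> hi - lo \<or> (\<exists>i<J. pi < gap_angle q J i \<and> 2*pi - gap_angle q J i \<le> hi - lo \<and> cis hi = q i))"
      then obtain lo hi where lh: "lo \<le> hi" "enat (cnt lo hi) \<le> Wd c'"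
        "pi \<le> hi - lo \<or> (\<exists>i<J. pi < gap_angle q J i \<and> 2*pi - gap_angle q J i \<le> hi - lo \<and> cis hi = q i)"
        by blast
      hence "pi \<le> hi - lo" using nb by blast
      hence "6 \<le> cnt lo hi" by (rule cnt_ge6)
      hence "enat 6 \<le> enat (cnt lo hi)" by simp
      hence "(6::enat) \<le> enat (cnt lo hi)" using six_enat by metis
      thus ?thesis using c(4) lh(2) by (meson order_trans)
    qed
  qed
  hence "Wd_minimizing q J c" unfolding Wd_minimizing_def using c(1) by blast
  thus "\<exists>c. Wd_minimizing q J c \<and> embedded c \<and> (winding c = 1 \<or> winding c = -1)"
    using c(2,3) by blast
qed


end
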